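(* Let $m \ge 1$, let $\omega_0 \in \mathbb{R}$, $\gamma > 0$, let $\tilde C \in M_m$ be invertible, and let $\tilde{\boldsymbol\kappa}, \tilde{\boldsymbol d} \in \mathbb{C}^m$ (column vectors). For $\omega \in \mathbb{R}$ define $$\tilde S(\omega) = \tilde C + \frac{\tilde{\boldsymbol d}\,\tilde{\boldsymbol\kappa}^T}{-i(\omega-\omega_0) + \gamma}, \qquad \tilde\rho = -\frac{\tilde{\boldsymbol\kappa}^T \tilde C^{-1}\tilde{\boldsymbol d}}{2\gamma} \in \mathbb{C}.$$ Then as $\omega$ runs over $\mathbb{R}$, $\det\tilde S(\omega)$ traces out a circle in $\mathbb{C}$ (with $\det \tilde S(\omega) \to \det\tilde C$ as $\omega \to \pm\infty$), and: if $\operatorname{Re}\tilde\rho = \tfrac12$ this circle passes through the origin; if $\operatorname{Re}\tilde\rho \neq \tfrac12$ then $\det\tilde S(\omega)\neq 0$ for all real $\omega$ and the winding number of $\det\tilde S$ about the origin satisfies $$\operatorname{wn}(\tilde S) = \begin{cases} 0, & \operatorname{Re}\tilde\rho < \tfrac12,\\ 1, & \operatorname{Re}\tilde\rho > \tfrac12.\end{cases}$$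
   Context: $M_m$ denotes the complex $m\times m$ matrices. The winding number is $\operatorname{wn}(\tilde S) = \frac{1}{2\pi i}\int_{-\infty}^{\infty} \frac{1}{\det\tilde S(\omega)}\frac{d \det\tilde S(\omega)}{d\omega}\,d\omega$, i.e. the net change of a continuous polar angle of $\det\tilde S(\omega)$, divided by $2\pi$, as $\omega$ goes from $-\infty$ to $+\infty$ (the curve closes up since both limits equal $\det\tilde C$). *)

theory Defs
  imports "HOL-Analysis.Analysis"
begin

definition wn :: "(real \<Rightarrow> complex) \<Rightarrow> real" where
  "wn f = (THE w. \<exists>\<theta>::real \<Rightarrow> real. continuous_on UNIV \<theta> \<and>
              (\<forall>x. f x = complex_of_real (cmod (f x)) * cis (\<theta> x)) \<and>
              ((\<lambda>x. (\<theta> x - \<theta> (- x)) / (2 * pi)) \<longlongrightarrow> w) at_top)"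

definition Smat :: "complex^'m^'m \<Rightarrow> complex^'m \<Rightarrow> complex^'m \<Rightarrow> real \<Rightarrow> real \<Rightarrow> real \<Rightarrow> complex^'m^'m" where
  "Smat C \<kappa> d \<omega>0 \<gamma> \<omega> = (\<chi> i j. C $ i $ j + d $ i * \<kappa> $ j /
        (- \<i> * complex_of_real (\<omega> - \<omega>0) + complex_of_real \<gamma>))"

definition rho :: "complex^'m^'m \<Rightarrow> complex^'m \<Rightarrow> complex^'m \<Rightarrow> real \<Rightarrow> complex" where
  "rho C \<kappa> d \<gamma> = - (\<Sum>j\<in>UNIV. \<kappa> $ j * (matrix_inv C *v d) $ j) / (2 * complex_of_real \<gamma>)"

end

theory Submission
  imports Defs
begin

lemma wn_eqI:
  fixes f :: "real \<Rightarrow> complex" and \<theta> :: "real \<Rightarrow> real"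
  assumes cont: "continuous_on UNIV \<theta>"
    and pol: "\<And>x. f x = complex_of_real (cmod (f x)) * cis (\<theta> x)"
    and nz: "\<And>x. f x \<noteq> 0"
    and lim: "((\<lambda>x. (\<theta> x - \<theta> (- x)) / (2 * pi)) \<longlongrightarrow> w) at_top"
  shows "wn f = w"
  unfolding wn_def
proof (rule the_equality)
  show "\<exists>\<theta>. continuous_on UNIV \<theta> \<and> (\<forall>x. f x = complex_of_real (cmod (f x)) * cis (\<theta> x)) \<and>
      ((\<lambda>x. (\<theta> x - \<theta> (- x)) / (2 * pi)) \<longlongrightarrow> w) at_top"
    using assms by blast
next
  fix w' assume "\<exists>\<theta>. continuous_on UNIV \<theta> \<and> (\<forall>x. f x = complex_of_real (cmod (f x)) * cis (\<theta> x)) \<and>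
      ((\<lambda>x. (\<theta> x - \<theta> (- x)) / (2 * pi)) \<longlongrightarrow> w') at_top"
  then obtain \<theta>' where cont': "continuous_on UNIV \<theta>'"
    and pol': "\<And>x. f x = complex_of_real (cmod (f x)) * cis (\<theta>' x)"
    and lim': "((\<lambda>x. (\<theta>' x - \<theta>' (- x)) / (2 * pi)) \<longlongrightarrow> w') at_top" by blast
  define g where "g x = (\<theta>' x - \<theta> x) / (2 * pi)" for x
  have gint: "g x \<in> \<int>" for x
  proof -
    have "complex_of_real (cmod (f x)) \<noteq> 0" using nz[of x] by simp
    then have "cis (\<theta>' x) = cis (\<theta> x)" using pol[of x] pol'[of x] by (metis mult_left_cancel)
    then have "sin (\<theta>' x) = sin (\<theta> x) \<and> cos (\<theta>' x) = cos (\<theta> x)"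
      by (metis cis.sel)
    then obtain n :: int where "\<theta>' x = \<theta> x + 2 * pi * n" using sin_cos_eq_iff by blast
    then have "g x = of_int n" unfolding g_def by simp
    then show ?thesis by simp
  qed
  have "g constant_on UNIV"
  proof (rule continuous_discrete_range_constant)
    show "connected (UNIV :: real set)" by simp
    show "continuous_on UNIV g" unfolding g_def by (intro continuous_intros cont cont') auto
    fix x :: real assume "x \<in> UNIV"
    show "\<exists>e>0. \<forall>y. y \<in> UNIV \<and> g y \<noteq> g x \<longrightarrow> e \<le> norm (g y - g x)"
    proof (intro exI[of _ 1] conjI allI impI)
      fix y assume "y \<in> UNIV \<and> g y \<noteq> g x"
      then show "1 \<le> norm (g y - g x)"
        using Ints_nonzero_abs_ge1[of "g y - g x"] gint[of x] gint[of y] by auto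
    qed simp
  qed
  then have "g x = g (- x)" for x unfolding constant_on_def by auto
  then have "(\<theta>' x - \<theta>' (- x)) / (2 * pi) = (\<theta> x - \<theta> (- x)) / (2 * pi)" for x
    unfolding g_def by (simp add: field_simps)
  then have "((\<lambda>x. (\<theta> x - \<theta> (- x)) / (2 * pi)) \<longlongrightarrow> w') at_top" using lim' by simp
  then show "w' = w" using lim by (rule tendsto_unique[OF trivial_limit_at_top_linorder])
qed

lemma aux_alg: fixes w :: complex assumes "1 + w \<noteq> 0" "1 - w \<noteq> 0"
  shows "1 + (1 + w)^2 / ((1 + w) * (1 - w)) = 2 / (1 - w)"
proof -
  have "(1 + w)^2 / ((1 + w) * (1 - w)) = (1 + w) / (1 - w)"
    using assms by (simp add: power2_eq_square)
  also have "1 + \<dots> = ((1 - w) + (1 + w)) / (1 - w)" 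
  proof -
    have "1 - w \<noteq> 0" using assms by simp
    then have "(1 - w) / (1 - w) = 1" by simp
    then show ?thesis by (metis add_divide_distrib)
  qed
  also have "\<dots> = 2 / (1 - w)" by simp
  finally show ?thesis by simp
qed

lemma one_plus_cis_arctan:
  fixes s :: real
  shows "1 + cis (2 * arctan s) = 2 / (1 - \<i> * complex_of_real s)"
proof -
  have q: "sqrt (1 + s\<^sup>2) ^ 2 = 1 + s\<^sup>2" by (simp add: add_pos_nonneg)
  have c: "cis (arctan s) = (1 + \<i> * s) / sqrt (1 + s\<^sup>2)"
    by (simp add: complex_eq_iff cos_arctan sin_arctan)
  have "cis (2 * arctan s) = cis (arctan s) ^ 2"
    by (simp only: power2_eq_square cis_mult mult_2)
  also have "\<dots> = (1 + \<i> * s)^2 / complex_of_real (sqrt (1 + s\<^sup>2) ^ 2)"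
    unfolding c by (simp only: power_divide of_real_power)
  also have "\<dots> = (1 + \<i> * s)^2 / complex_of_real (1 + s\<^sup>2)" unfolding q ..
  also have "complex_of_real (1 + s\<^sup>2) = (1 + \<i> * s) * (1 - \<i> * s)"
    by (simp add: algebra_simps power2_eq_square)
  finally have e: "cis (2 * arctan s) = (1 + \<i> * s)^2 / ((1 + \<i> * s) * (1 - \<i> * s))" .
  have n1: "1 - \<i> * complex_of_real s \<noteq> 0" "1 + \<i> * complex_of_real s \<noteq> 0" by (simp_all add: complex_eq_iff)
  show ?thesis unfolding e by (rule aux_alg[OF n1(2) n1(1)])
qed
lemma cmod_sq_diff: "cmod (1 - r)^2 = cmod r^2 + 1 - 2 * Re r"
  unfolding cmod_power2 by (simp add: power2_eq_square algebra_simps)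

lemma cmod_one_minus: "cmod (1 - r) = cmod r \<longleftrightarrow> Re r = 1/2"
proof -
  have "cmod (1 - r) = cmod r \<longleftrightarrow> cmod (1-r)^2 = cmod r^2"
    by (metis norm_ge_zero power2_eq_iff_nonneg)
  then show ?thesis unfolding cmod_sq_diff by auto
qed

lemma cmod_one_minus_less: "cmod r < cmod (1 - r) \<longleftrightarrow> Re r < 1/2"
proof -
  have "cmod r < cmod (1 - r) \<longleftrightarrow> cmod r^2 < cmod (1-r)^2"
    using power_strict_mono[of "cmod r" "cmod (1-r)" 2] power2_less_imp_less[of "cmod r" "cmod (1-r)"] by auto
  then show ?thesis unfolding cmod_sq_diff by auto
qed

lemma cmod_one_minus_greater: "cmod (1 - r) < cmod r \<longleftrightarrow> Re r > 1/2"
proof -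
  have "cmod (1 - r) < cmod r \<longleftrightarrow> cmod (1-r)^2 < cmod r^2"
    using power_strict_mono[of "cmod (1-r)" "cmod r" 2] power2_less_imp_less[of "cmod (1-r)" "cmod r"] by auto
  then show ?thesis unfolding cmod_sq_diff by auto
qed
lemma scalar_repr:
  fixes D a r :: complex and \<omega>0 \<gamma> \<omega> :: real
  assumes \<gamma>: "\<gamma> > 0" and r: "r = - a / (2 * complex_of_real \<gamma>)"
  shows "D * (1 + a / (- \<i> * complex_of_real (\<omega> - \<omega>0) + complex_of_real \<gamma>)) =
         D * (1 - r) - D * r * cis (2 * arctan ((\<omega> - \<omega>0) / \<gamma>))"
proof -
  define s where "s = (\<omega> - \<omega>0) / \<gamma>"
  define w where "w = 1 - \<i> * complex_of_real s"
  have g0: "complex_of_real \<gamma> \<noteq> 0" using \<gamma> by simp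
  have "complex_of_real \<gamma> * w = complex_of_real \<gamma> - \<i> * complex_of_real (\<gamma> * s)"
    unfolding w_def by (simp add: algebra_simps)
  also have "\<gamma> * s = \<omega> - \<omega>0" unfolding s_def using \<gamma> by simp
  finally have zz: "- \<i> * complex_of_real (\<omega> - \<omega>0) + complex_of_real \<gamma> = complex_of_real \<gamma> * w"
    by simp
  have a: "a = - 2 * complex_of_real \<gamma> * r" using r g0 by simp
  have E: "cis (2 * arctan s) = 2 / w - 1"
    using one_plus_cis_arctan[of s] unfolding w_def by (simp add: algebra_simps)
  have nz: "w \<noteq> 0" unfolding w_def by (simp add: complex_eq_iff)
  have "a / (complex_of_real \<gamma> * w) = - r * (2 / w)" unfolding a using g0 nz by simp
  then show ?thesis unfolding zz E s_def[symmetric]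
    by (simp add: algebra_simps)
qed
lemma cmod_sgn: fixes z :: complex shows "complex_of_real (cmod z) * sgn z = z"
  by (cases "z = 0") (simp_all add: sgn_div_norm scaleR_conv_of_real)

lemma polar_gen:
  fixes a b :: complex
  assumes "a \<noteq> 0" "b \<noteq> 0"
  shows "a * b * cis t = complex_of_real (cmod (a * b * cis t)) * cis (Arg a + t + Arg b)"
proof -
  have "cis (Arg a + t + Arg b) = sgn a * cis t * sgn b"
    using cis_Arg[OF assms(1)] cis_Arg[OF assms(2)] by (simp only: flip: cis_mult)
  moreover have "cmod (a * b * cis t) = cmod a * cmod b" by (simp add: norm_mult)
  ultimately have "complex_of_real (cmod (a * b * cis t)) * cis (Arg a + t + Arg b) =
     (complex_of_real (cmod a) * sgn a) * (complex_of_real (cmod b) * sgn b) * cis t"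
    by (simp add: ac_simps)
  then show ?thesis by (simp only: cmod_sgn)
qed

lemma lim_lin_at_top:
  fixes \<gamma> b :: real assumes "\<gamma> > 0"
  shows "LIM x at_top. (x + b) / \<gamma> :> at_top"
proof -
  have "LIM x at_top. b + x :> at_top"
    by (rule filterlim_tendsto_add_at_top[OF tendsto_const filterlim_ident])
  then have "LIM x at_top. (1/\<gamma>) * (b + x) :> at_top"
    using filterlim_tendsto_pos_mult_at_top[OF tendsto_const, of "1/\<gamma>"] assms by simp
  then show ?thesis by (simp add: add.commute)
qed

lemma cis_minus_pi: "cis (- pi) = -1"
  by (simp add: complex_eq_iff)

lemma scalar_main:
  fixes F :: "real \<Rightarrow> complex" and D r :: complex and \<omega>0 \<gamma> :: real
  assumes \<gamma>: "\<gamma> > 0" and D: "D \<noteq> 0"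
    and F: "\<And>\<omega>. F \<omega> = D * (1 - r) - D * r * cis (2 * arctan ((\<omega> - \<omega>0) / \<gamma>))"
  shows "(\<exists>c R. R \<ge> 0 \<and> F ` UNIV \<subseteq> sphere c R \<and> F ` UNIV \<union> {D} = sphere c R
            \<and> (Re r = 1/2 \<longrightarrow> 0 \<in> sphere c R))
       \<and> (F \<longlongrightarrow> D) at_top \<and> (F \<longlongrightarrow> D) at_bot
       \<and> (Re r \<noteq> 1/2 \<longrightarrow> (\<forall>\<omega>. F \<omega> \<noteq> 0) \<and> wn F = (if Re r < 1/2 then 0 else 1))"
proof -
  define \<alpha> where "\<alpha> \<omega> = arctan ((\<omega> - \<omega>0) / \<gamma>)" for \<omega>
  define E where "E \<omega> = cis (2 * \<alpha> \<omega>)" for \<omega>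
  have FE: "F \<omega> = D * (1 - r) - D * r * E \<omega>" for \<omega> unfolding E_def \<alpha>_def F ..
  have La_top: "(\<alpha> \<longlongrightarrow> pi/2) at_top"
    unfolding \<alpha>_def using filterlim_compose[OF tendsto_arctan_at_top lim_lin_at_top[OF \<gamma>, of "-\<omega>0"]]
    by simp
  have an: "\<alpha> (- x) = - arctan ((x + \<omega>0) / \<gamma>)" for x
  proof -
    have "(- x - \<omega>0) / \<gamma> = - ((x + \<omega>0) / \<gamma>)" using \<gamma> by (simp add: field_simps)
    then show ?thesis unfolding \<alpha>_def by (simp only: arctan_minus)
  qed
  have La_neg: "((\<lambda>x. \<alpha> (- x)) \<longlongrightarrow> - (pi/2)) at_top"
    unfolding an using filterlim_compose[OF tendsto_arctan_at_top lim_lin_at_top[OF \<gamma>, of "\<omega>0"]]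
    by (intro tendsto_minus)
  have La_bot: "(\<alpha> \<longlongrightarrow> - (pi/2)) at_bot"
    using La_neg by (simp add: filterlim_at_bot_mirror)
  have LE_top: "(E \<longlongrightarrow> -1) at_top"
  proof -
    have "(E \<longlongrightarrow> cis (2 * (pi/2))) at_top" unfolding E_def by (intro tendsto_intros La_top)
    then show ?thesis by simp
  qed
  have LE_bot: "(E \<longlongrightarrow> -1) at_bot"
  proof -
    have "(E \<longlongrightarrow> cis (2 * (-(pi/2)))) at_bot" unfolding E_def by (intro tendsto_intros La_bot)
    then show ?thesis by (simp add: cis_minus_pi)
  qed
  have LE_neg: "((\<lambda>x. E (- x)) \<longlongrightarrow> -1) at_top"
    using LE_bot by (simp add: filterlim_at_bot_mirror)
  have LF_top: "(F \<longlongrightarrow> D) at_top"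
  proof -
    have "(F \<longlongrightarrow> D * (1 - r) - D * r * (-1)) at_top"
      unfolding FE[abs_def] by (intro tendsto_intros LE_top)
    then show ?thesis by (simp add: algebra_simps)
  qed
  have LF_bot: "(F \<longlongrightarrow> D) at_bot"
  proof -
    have "(F \<longlongrightarrow> D * (1 - r) - D * r * (-1)) at_bot"
      unfolding FE[abs_def] by (intro tendsto_intros LE_bot)
    then show ?thesis by (simp add: algebra_simps)
  qed
  have nE: "cmod (E \<omega>) = 1" for \<omega> unfolding E_def by simp
  define c where "c = D * (1 - r)"
  define R where "R = cmod D * cmod r"
  have distF: "dist c (F \<omega>) = R" for \<omega>
    unfolding FE c_def R_def dist_norm by (simp add: norm_mult nE)
  have sub: "F ` UNIV \<subseteq> sphere c R" using distF by auto
  have Dsph: "D \<in> sphere c R" unfolding c_def R_def by (simp add: dist_norm algebra_simps norm_mult)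
  have sup: "sphere c R \<subseteq> F ` UNIV \<union> {D}"
  proof
    fix w assume w: "w \<in> sphere c R"
    show "w \<in> F ` UNIV \<union> {D}"
    proof (cases "w = D")
      case True then show ?thesis by simp
    next
      case False
      have r0: "r \<noteq> 0"
      proof
        assume "r = 0"
        then have "w = c" using w unfolding R_def by simp
        then show False using False \<open>r = 0\<close> unfolding c_def by simp
      qed
      define e where "e = (c - w) / (D * r)"
      have we: "w = c - D * r * e" unfolding e_def using r0 D by simp
      have ne: "cmod e = 1" using w r0 D unfolding e_def R_def by (simp add: dist_norm norm_divide norm_mult)
      have em1: "e \<noteq> -1"
      proof
        assume "e = -1"
        then have "w = D" unfolding we c_def by (simp add: algebra_simps)
        then show False using False by simp
      qed
      have "Arg e \<noteq> pi"
      proof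
        assume "Arg e = pi"
        then have "Re e < 0" "Im e = 0" by (simp_all add: Arg_eq_pi)
        then have "e = -1" using ne by (simp add: complex_eq_iff cmod_def)
        then show False using em1 by simp
      qed
      then have b1: "- pi < Arg e" "Arg e < pi" using Arg_bounded[of e] by auto
      define \<beta> where "\<beta> = Arg e / 2"
      define \<omega> where "\<omega> = \<omega>0 + \<gamma> * tan \<beta>"
      have "\<alpha> \<omega> = \<beta>" unfolding \<alpha>_def \<omega>_def using \<gamma> b1
        by (simp add: \<beta>_def arctan_tan)
      have e0: "e \<noteq> 0" using ne by auto
      have "sgn e = e" using ne by (simp add: sgn_div_norm)
      then have "cis (Arg e) = e" using cis_Arg[OF e0] by simp
      moreover have "2 * \<beta> = Arg e" unfolding \<beta>_def by simp
      ultimately have "E \<omega> = e" unfolding E_def using \<open>\<alpha> \<omega> = \<beta>\<close> by simp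
      then have "F \<omega> = w" unfolding FE we c_def by simp
      then show ?thesis by auto
    qed
  qed
  have circ: "\<exists>c R. R \<ge> 0 \<and> F ` UNIV \<subseteq> sphere c R \<and> F ` UNIV \<union> {D} = sphere c R
            \<and> (Re r = 1/2 \<longrightarrow> 0 \<in> sphere c R)"
  proof (intro exI conjI impI)
    show "R \<ge> 0" unfolding R_def by simp
    show "F ` UNIV \<subseteq> sphere c R" by (rule sub)
    show "F ` UNIV \<union> {D} = sphere c R" using sub sup Dsph by auto
    assume "Re r = 1/2"
    then have "cmod (1 - r) = cmod r" using cmod_one_minus by blast
    then show "0 \<in> sphere c R" unfolding c_def R_def by (simp add: norm_mult)
  qed
  have nz: "F \<omega> \<noteq> 0" if "Re r \<noteq> 1/2" for \<omega>
  proof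
    assume "F \<omega> = 0"
    then have "D * (1 - r) = D * (r * E \<omega>)" unfolding FE by simp
    then have "1 - r = r * E \<omega>" using D by simp
    then have "cmod (1 - r) = cmod r" by (simp add: norm_mult nE)
    then show False using that cmod_one_minus by blast
  qed
  have wnres: "wn F = (if Re r < 1/2 then 0 else 1)" if hr: "Re r \<noteq> 1/2"
  proof (cases "Re r < 1/2")
    case True
    then have lt: "cmod r < cmod (1 - r)" using cmod_one_minus_less by blast
    then have r1: "1 - r \<noteq> 0" by auto
    define q where "q = r / (1 - r)"
    have nq: "cmod q < 1" unfolding q_def using lt r1 by (simp add: norm_divide divide_less_eq)
    define h where "h x = 1 - q * E x" for x
    have Reh: "Re (h x) > 0" for x
    proof -
      have "Re (q * E x) \<le> cmod (q * E x)" by (rule complex_Re_le_cmod)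
      then show ?thesis unfolding h_def using nq by (simp add: norm_mult nE)
    qed
    have hnz: "h x \<noteq> 0" for x using Reh[of x] by auto
    have hR: "h x \<notin> \<real>\<^sub>\<le>\<^sub>0" for x using Reh[of x] by (auto simp: complex_nonpos_Reals_iff)
    have c0: "c \<noteq> 0" unfolding c_def using D r1 by simp
    have Fh: "F x = c * h x * cis 0" for x
    proof -
      have "c * h x = D * (1 - r) - D * ((1 - r) * q) * E x" unfolding c_def h_def by (simp add: algebra_simps)
      also have "(1 - r) * q = r" unfolding q_def using r1 by simp
      finally show ?thesis unfolding FE by simp
    qed
    define \<theta> where "\<theta> x = Arg c + 0 + Arg (h x)" for x
    have pol: "F x = complex_of_real (cmod (F x)) * cis (\<theta> x)" for x
      unfolding \<theta>_def Fh by (rule polar_gen[OF c0 hnz])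
    have hc: "continuous_on UNIV h" unfolding h_def E_def \<alpha>_def by (intro continuous_intros) (use \<gamma> in auto)
    have cont: "continuous_on UNIV \<theta>" unfolding \<theta>_def
      using hc hR by (intro continuous_intros) auto
    have Lh1: "(h \<longlongrightarrow> 1 + q) at_top" 
    proof -
      have "(h \<longlongrightarrow> 1 - q * (-1)) at_top" unfolding h_def[abs_def] by (intro tendsto_intros LE_top)
      then show ?thesis by simp
    qed
    have Lh2: "((\<lambda>x. h (- x)) \<longlongrightarrow> 1 + q) at_top" 
    proof -
      have "((\<lambda>x. h (- x)) \<longlongrightarrow> 1 - q * (-1)) at_top" unfolding h_def by (intro tendsto_intros LE_neg)
      then show ?thesis by simp
    qed
    have Rq: "Re (1 + q) > 0" using abs_Re_le_cmod[of q] nq by (simp add: abs_le_iff) 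
    then have nR: "1 + q \<notin> \<real>\<^sub>\<le>\<^sub>0" by (auto simp: complex_nonpos_Reals_iff)
    have "((\<lambda>x. (\<theta> x - \<theta> (- x)) / (2 * pi)) \<longlongrightarrow>
       ((Arg c + 0 + Arg (1 + q)) - (Arg c + 0 + Arg (1 + q))) / (2 * pi)) at_top"
      unfolding \<theta>_def by (intro tendsto_intros Lh1 Lh2 nR) auto
    then have "((\<lambda>x. (\<theta> x - \<theta> (- x)) / (2 * pi)) \<longlongrightarrow> 0) at_top" by simp
    then have "wn F = 0" using wn_eqI[OF cont pol nz[OF hr]] by blast
    then show ?thesis using True by simp
  next
    case False
    then have gt: "Re r > 1/2" using hr by simp
    then have lt: "cmod (1 - r) < cmod r" using cmod_one_minus_greater by blast
    then have r0: "r \<noteq> 0" by auto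
    define q where "q = (1 - r) / r"
    have nq: "cmod q < 1" unfolding q_def using lt r0 by (simp add: norm_divide divide_less_eq)
    define h where "h x = 1 - q * cis (- (2 * \<alpha> x))" for x
    have Reh: "Re (h x) > 0" for x
    proof -
      have "Re (q * cis (- (2 * \<alpha> x))) \<le> cmod (q * cis (- (2 * \<alpha> x)))" by (rule complex_Re_le_cmod)
      then show ?thesis unfolding h_def using nq by (simp add: norm_mult)
    qed
    have hnz: "h x \<noteq> 0" for x using Reh[of x] by auto
    have hR: "h x \<notin> \<real>\<^sub>\<le>\<^sub>0" for x using Reh[of x] by (auto simp: complex_nonpos_Reals_iff)
    define K where "K = - D * r"
    have K0: "K \<noteq> 0" unfolding K_def using D r0 by simp
    have cc: "cis (- (2 * \<alpha> x)) * cis (2 * \<alpha> x) = 1" for x by (simp add: cis_mult)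
    have Fh: "F x = K * h x * cis (2 * \<alpha> x)" for x
    proof -
      have e1: "K * h x * cis (2 * \<alpha> x) = - D * r * cis (2 * \<alpha> x) + D * r * q * (cis (- (2 * \<alpha> x)) * cis (2 * \<alpha> x))"
        unfolding K_def h_def by (simp add: algebra_simps)
      have e2: "D * r * q = D * (1 - r)" unfolding q_def using r0 by simp
      show ?thesis unfolding FE E_def e1 cc e2 by simp
    qed
    define \<theta> where "\<theta> x = Arg K + 2 * \<alpha> x + Arg (h x)" for x
    have pol: "F x = complex_of_real (cmod (F x)) * cis (\<theta> x)" for x
      unfolding \<theta>_def Fh using polar_gen[OF K0 hnz[of x]] by simp
    have hc: "continuous_on UNIV h" unfolding h_def \<alpha>_def by (intro continuous_intros) (use \<gamma> in auto)
    have ac: "continuous_on UNIV \<alpha>" unfolding \<alpha>_def by (intro continuous_intros) (use \<gamma> in auto)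
    have cont: "continuous_on UNIV \<theta>" unfolding \<theta>_def
      using hc ac hR by (intro continuous_intros) auto
    have Lh1: "(h \<longlongrightarrow> 1 + q) at_top" 
    proof -
      have "(h \<longlongrightarrow> 1 - q * cis (- (2 * (pi/2)))) at_top" unfolding h_def[abs_def] by (intro tendsto_intros La_top)
      then show ?thesis by (simp add: cis_minus_pi)
    qed
    have Lh2: "((\<lambda>x. h (- x)) \<longlongrightarrow> 1 + q) at_top" 
    proof -
      have "((\<lambda>x. h (- x)) \<longlongrightarrow> 1 - q * cis (- (2 * (-(pi/2))))) at_top" unfolding h_def by (intro tendsto_intros La_neg)
      then show ?thesis by simp
    qed
    have Rq: "Re (1 + q) > 0" using abs_Re_le_cmod[of q] nq by (simp add: abs_le_iff) 
    then have nR: "1 + q \<notin> \<real>\<^sub>\<le>\<^sub>0" by (auto simp: complex_nonpos_Reals_iff)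
    have "((\<lambda>x. (\<theta> x - \<theta> (- x)) / (2 * pi)) \<longlongrightarrow>
       ((Arg K + 2 * (pi/2) + Arg (1 + q)) - (Arg K + 2 * (-(pi/2)) + Arg (1 + q))) / (2 * pi)) at_top"
      unfolding \<theta>_def by (intro tendsto_intros Lh1 Lh2 nR La_top La_neg) auto
    then have "((\<lambda>x. (\<theta> x - \<theta> (- x)) / (2 * pi)) \<longlongrightarrow> 1) at_top" by simp
    then have "wn F = 1" using wn_eqI[OF cont pol nz[OF hr]] by blast
    then show ?thesis using False by simp
  qed
  show ?thesis using circ LF_top LF_bot nz wnres by blast
qed
lemma det_rank1_Q:
  fixes c :: "'n::finite \<Rightarrow> 'a::comm_ring_1^'n" and u :: "'n \<Rightarrow> 'a" and v :: "'a^'n"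
  assumes "finite T" "z \<notin> T"
  shows "det (\<chi> i. if i = z then v else if i \<in> T then c i + u i *s v else c i)
       = det (\<chi> i. if i = z then v else c i)"
  using assms
proof (induction T rule: finite_induct)
  case empty
  show ?case by (simp cong: if_cong)
next
  case (insert t T)
  define B where "B = ((\<chi> i. if i = z then v else if i \<in> T then c i + u i *s v else c i) :: 'a^'n^'n)"
  have tz: "t \<noteq> z" using insert by auto
  have zT: "z \<notin> T" using insert by auto
  have "(\<chi> i. if i = z then v else if i \<in> insert t T then c i + u i *s v else c i)
      = (\<chi> k. if k = t then row t B + u t *s row z B else row k B)"
    using tz insert.hyps(2) unfolding B_def by (auto simp: vec_eq_iff row_def)
  then have "det (\<chi> i. if i = z then v else if i \<in> insert t T then c i + u i *s v else c i) = det B"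
    using det_row_operation[OF tz, of B "u t"] by simp
  also have "\<dots> = det (\<chi> i. if i = z then v else c i)" unfolding B_def by (rule insert.IH[OF zT])
  finally show ?case .
qed

lemma det_rank1_P:
  fixes c :: "'n::finite \<Rightarrow> 'a::comm_ring_1^'n" and u :: "'n \<Rightarrow> 'a" and v :: "'a^'n"
  assumes "finite T"
  shows "det (\<chi> i. if i \<in> T then c i + u i *s v else c i)
       = det (\<chi> i. c i) + (\<Sum>k\<in>T. u k * det (\<chi> i. if i = k then v else c i))"
  using assms
proof (induction T rule: finite_induct)
  case empty
  show ?case by simp
next
  case (insert z T)
  define c' where "c' i = (if i \<in> T then c i + u i *s v else c i)" for i
  have "(\<chi> i. if i \<in> insert z T then c i + u i *s v else c i)
      = (\<chi> i. if i = z then c i + u i *s v else c' i)"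
    unfolding c'_def by (auto simp: vec_eq_iff)
  then have "det (\<chi> i. if i \<in> insert z T then c i + u i *s v else c i)
      = det (\<chi> i. if i = z then c i else c' i) + det (\<chi> i. if i = z then u i *s v else c' i)"
    using det_row_add[of z c "\<lambda>i. u i *s v" c'] by simp
  also have "(\<chi> i. if i = z then c i else c' i) = (\<chi> i. if i \<in> T then c i + u i *s v else c i)"
    unfolding c'_def using insert.hyps(2) by (auto simp: vec_eq_iff)
  also have "(\<chi> i. if i = z then u i *s v else c' i) = (\<chi> i. if i = z then u z *s v else c' i)"
    by (auto simp: vec_eq_iff)
  also have "det \<dots> = u z * det (\<chi> i. if i = z then v else c' i)"
    using det_row_mul[of z "u z" "\<lambda>i. v" c'] by simp
  also have "det (\<chi> i. if i = z then v else c' i) = det (\<chi> i. if i = z then v else c i)"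
    unfolding c'_def using det_rank1_Q[OF insert.hyps(1,2), of v c u] by simp
  finally show ?case using insert.IH insert.hyps by (simp add: algebra_simps)
qed

lemma matrix_inv_left:
  fixes C :: "'a::semiring_1^'n^'n"
  assumes "invertible C"
  shows "matrix_inv C ** C = mat 1"
  using someI_ex[of "\<lambda>A'. C ** A' = mat 1 \<and> A' ** C = mat 1"] assms
  unfolding invertible_def matrix_inv_def by blast

lemma det_rank1:
  fixes C :: "'a::field^'n^'n" and u :: "'n \<Rightarrow> 'a" and v :: "'a^'n"
  assumes "invertible C"
  shows "det (\<chi> i. row i C + u i *s v)
       = det C * (1 + (\<Sum>k\<in>UNIV. u k * (\<Sum>j\<in>UNIV. v $ j * matrix_inv C $ j $ k)))"
proof -
  have "det (\<chi> i. row i C + u i *s v) = det (\<chi> i. if i \<in> UNIV then row i C + u i *s v else row i C)"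
    by simp
  also have "\<dots> = det (\<chi> i. row i C) + (\<Sum>k\<in>UNIV. u k * det (\<chi> i. if i = k then v else row i C))"
    by (rule det_rank1_P) simp
  also have "(\<chi> i. row i C) = C" by (simp add: vec_eq_iff row_def)
  finally have e: "det (\<chi> i. row i C + u i *s v) = det C + (\<Sum>k\<in>UNIV. u k * det (\<chi> i. if i = k then v else row i C))" .
  have cr: "det (\<chi> i. if i = k then v else row i C) = (v v* matrix_inv C) $ k * det C" for k
  proof -
    define x where "x = v v* matrix_inv C"
    have "x v* C = v" unfolding x_def vector_matrix_mul_assoc matrix_inv_left[OF assms] by simp
    then have s: "sum (\<lambda>i. x$i *s row i C) UNIV = v"
      by (simp add: vec_eq_iff vector_matrix_mult_def row_def mult.commute)
    have "det (\<chi> i. if i = k then v else row i C) = x $ k * det C"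
      using cramer_lemma_transpose[of k x C] unfolding s .
    then show ?thesis unfolding x_def .
  qed
  show ?thesis unfolding e cr
    by (simp add: vector_matrix_mult_def algebra_simps sum_distrib_left sum_distrib_right sum.distrib)
qed

theorem mainTheorem2:
  fixes C :: "complex^'m^'m" and \<kappa> d :: "complex^'m" and \<omega>0 \<gamma> :: real
  assumes "\<gamma> > 0" and "invertible C"
  shows "(\<exists>c r. r \<ge> 0 \<and> (\<lambda>\<omega>. det (Smat C \<kappa> d \<omega>0 \<gamma> \<omega>)) ` UNIV \<subseteq> sphere c r
            \<and> (\<lambda>\<omega>. det (Smat C \<kappa> d \<omega>0 \<gamma> \<omega>)) ` UNIV \<union> {det C} = sphere c r
            \<and> (Re (rho C \<kappa> d \<gamma>) = 1/2 \<longrightarrow> 0 \<in> sphere c r))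
       \<and> ((\<lambda>\<omega>. det (Smat C \<kappa> d \<omega>0 \<gamma> \<omega>)) \<longlongrightarrow> det C) at_top
       \<and> ((\<lambda>\<omega>. det (Smat C \<kappa> d \<omega>0 \<gamma> \<omega>)) \<longlongrightarrow> det C) at_bot
       \<and> (Re (rho C \<kappa> d \<gamma>) \<noteq> 1/2 \<longrightarrow>
            (\<forall>\<omega>. det (Smat C \<kappa> d \<omega>0 \<gamma> \<omega>) \<noteq> 0) \<and>
            wn (\<lambda>\<omega>. det (Smat C \<kappa> d \<omega>0 \<gamma> \<omega>)) =
              (if Re (rho C \<kappa> d \<gamma>) < 1/2 then 0 else 1))"
proof -
  define Cinv where "Cinv = matrix_inv C"
  define a where "a = (\<Sum>j\<in>UNIV. \<kappa> $ j * (Cinv *v d) $ j)"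
  define r where "r = rho C \<kappa> d \<gamma>"
  have r: "r = - a / (2 * complex_of_real \<gamma>)" unfolding r_def rho_def a_def Cinv_def ..
  have D: "det C \<noteq> 0" using assms(2) invertible_det_nz by blast
  have a_alt: "a = (\<Sum>k\<in>UNIV. d $ k * (\<Sum>j\<in>UNIV. \<kappa> $ j * Cinv $ j $ k))"
    unfolding a_def matrix_vector_mult_def by (simp add: sum_distrib_left mult_ac) (rule sum.swap)
  have Sdet: "det (Smat C \<kappa> d \<omega>0 \<gamma> \<omega>) = det C * (1 + a / (- \<i> * complex_of_real (\<omega> - \<omega>0) + complex_of_real \<gamma>))" for \<omega>
  proof -
    define zz where "zz = - \<i> * complex_of_real (\<omega> - \<omega>0) + complex_of_real \<gamma>"
    have "Smat C \<kappa> d \<omega>0 \<gamma> \<omega> = (\<chi> i. row i C + (d $ i / zz) *s \<kappa>)"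
      unfolding Smat_def zz_def by (simp add: vec_eq_iff row_def)
    then have "det (Smat C \<kappa> d \<omega>0 \<gamma> \<omega>) = det C * (1 + (\<Sum>k\<in>UNIV. d $ k / zz * (\<Sum>j\<in>UNIV. \<kappa> $ j * Cinv $ j $ k)))"
      using det_rank1[OF assms(2), of "\<lambda>i. d $ i / zz" \<kappa>] unfolding Cinv_def by simp
    also have "(\<Sum>k\<in>UNIV. d $ k / zz * (\<Sum>j\<in>UNIV. \<kappa> $ j * Cinv $ j $ k)) = a / zz"
      unfolding a_alt by (simp add: sum_divide_distrib)
    finally show ?thesis unfolding zz_def .
  qed
  have F: "det (Smat C \<kappa> d \<omega>0 \<gamma> \<omega>) = det C * (1 - r) - det C * r * cis (2 * arctan ((\<omega> - \<omega>0) / \<gamma>))" for \<omega>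
    unfolding Sdet by (rule scalar_repr[OF assms(1) r])
  from scalar_main[of \<gamma> "det C" "\<lambda>\<omega>. det (Smat C \<kappa> d \<omega>0 \<gamma> \<omega>)" r \<omega>0, OF assms(1) D F]
  show ?thesis unfolding r_def .
qed

end
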